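(* Let $g$ be analytic on $\mathbb{D}$ and suppose there is $x\in(0,1)$ with $g(x)=x$ and $g(-x)=-x$. Then $\operatorname{Diam} g(\mathbb{D})\ge 2$, with equality if and only if $g(z)=z$ for all $z\in\mathbb{D}$.
   Context: $\mathbb{D}$ is the open unit disk; $\operatorname{Diam}E=\sup_{z,w\in E}|z-w|$. *)

theory Defs
  imports "HOL-Complex_Analysis.Complex_Analysis"
begin

text \<open>Diameter of a set of complex numbers, valued in the extended reals
  (so that unbounded sets have diameter infinity): sup of distances.\<close>
definition Diam :: "complex set \<Rightarrow> ereal" where
  "Diam E = (SUP z\<in>E. SUP w\<in>E. ereal (cmod (z - w)))"

end

theory Submission
  imports Defs
begin


lemma schwarz_le:
  fixes f :: "complex \<Rightarrow> complex"
  assumes holf: "f holomorphic_on ball 0 1" and f0: "f 0 = 0"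
    and bd: "\<And>z. z \<in> ball 0 1 \<Longrightarrow> norm (f z) \<le> 1"
    and xi: "norm \<xi> < 1"
  shows "norm (f \<xi>) \<le> norm \<xi>"
proof (rule field_le_epsilon)
  fix e :: real assume e: "0 < e"
  have n1: "norm (complex_of_real (1+e)) = 1+e" using e by (simp only: norm_of_real)
  have "norm (f \<xi> / complex_of_real (1 + e)) \<le> norm \<xi>"
  proof (rule Schwarz_Lemma(1)[of "\<lambda>z. f z / complex_of_real (1+e)"])
    show "(\<lambda>z. f z / complex_of_real (1+e)) holomorphic_on ball 0 1"
      using holf e by (intro holomorphic_intros) auto
    show "f 0 / complex_of_real (1+e) = 0" using f0 by simp
    fix z :: complex assume "norm z < 1"
    then have "norm (f z) \<le> 1" using bd by simp
    then show "norm (f z / complex_of_real (1+e)) < 1" using e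
      by (simp only: norm_divide n1) (simp add: divide_less_eq)
  qed (use xi in auto)
  then have "norm (f \<xi>) \<le> (1+e) * norm \<xi>" using e
    by (simp only: norm_divide n1) (simp add: divide_le_eq mult.commute)
  also have "\<dots> \<le> norm \<xi> + e" using xi e by (simp add: algebra_simps)
  finally show "norm (f \<xi>) \<le> norm \<xi> + e" .
qed

lemma not_open_sub_reals:
  assumes "open (U::complex set)" "U \<noteq> {}" "U \<subseteq> \<real>"
  shows False
proof -
  obtain u where u: "u \<in> U" using assms by auto
  then obtain e where e: "e > 0" "ball u e \<subseteq> U" using assms(1) open_contains_ball by blast
  have "u + \<i> * of_real (e/2) \<in> ball u e" using e by (simp add: dist_norm norm_mult)
  then have "u + \<i> * of_real (e/2) \<in> \<real>" "u \<in> \<real>" using e u assms(3) by auto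
  then have "Im (u + \<i> * of_real (e/2)) = 0" "Im u = 0" by (auto simp: complex_is_Real_iff)
  then show False using e by simp
qed



lemma neg_hol: 
  fixes g :: "complex \<Rightarrow> complex"
  assumes "g holomorphic_on ball 0 1" "\<And>u. u \<in> ball 0 1 \<Longrightarrow> c * u \<in> ball 0 1"
  shows "(\<lambda>u. g (c * u)) holomorphic_on ball 0 1"
proof -
  have "(g \<circ> (\<lambda>u. c * u)) holomorphic_on ball 0 1"
    by (rule holomorphic_on_compose_gen[OF _ assms(1)]) (use assms(2) in \<open>auto intro!: holomorphic_intros\<close>)
  then show ?thesis by (simp add: o_def)
qed

lemma odd_part:
  fixes g :: "complex \<Rightarrow> complex" and x :: real
  assumes holf: "g holomorphic_on ball 0 1"
    and bd: "\<And>z w. z \<in> ball 0 1 \<Longrightarrow> w \<in> ball 0 1 \<Longrightarrow> cmod (g z - g w) \<le> 2"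
    and x: "0 < x" "x < 1"
    and gx: "g (complex_of_real x) = complex_of_real x"
    and gmx: "g (- complex_of_real x) = - complex_of_real x"
    and u: "u \<in> ball 0 1"
  shows "g u - g (- u) = 2 * u"
proof -
  define h where "h = (\<lambda>u. (g u - g (- u)) / 2)"
  have hm: "(\<lambda>u. g ((-1) * u)) holomorphic_on ball 0 1"
    by (rule neg_hol[OF holf]) auto
  have hh: "h holomorphic_on ball 0 1"
    unfolding h_def using hm holf by (auto intro!: holomorphic_intros)
  have h0: "h 0 = 0" by (simp add: h_def)
  have hb: "norm (h z) \<le> 1" if "z \<in> ball 0 1" for z
    using bd[of z "-z"] that by (simp add: h_def norm_divide)
  have hs: "norm (h z) \<le> norm z" if "z \<in> ball 0 1" for z
    by (rule schwarz_le[OF hh h0 hb]) (use that in auto)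
  define k where "k = (\<lambda>z. if z = 0 then deriv h 0 else (h z - h 0) / (z - 0))"
  have hk: "k holomorphic_on ball 0 1" unfolding k_def
    by (rule pole_lemma[OF hh]) auto
  have kx: "k (complex_of_real x) = 1"
    using x gx gmx by (simp add: k_def h_def)
  have "k constant_on ball 0 1"
  proof (rule maximum_modulus_principle[OF hk _ _ _ _ _ ])
    show "open (ball 0 1 - {0::complex})" by auto
    show "complex_of_real x \<in> ball 0 1 - {0}" using x by auto
    fix z :: complex assume z: "z \<in> ball 0 1 - {0}"
    then have "norm (k z) \<le> 1" using hs[of z] by (simp add: k_def h0 norm_divide divide_le_eq)
    then show "norm (k z) \<le> norm (k (complex_of_real x))" using kx by simp
  qed auto
  then obtain c where c: "\<And>z. z \<in> ball 0 1 \<Longrightarrow> k z = c" unfolding constant_on_def by blast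
  have "k u = 1" using c[of u] c[of "complex_of_real x"] kx u x by auto
  then have "u \<noteq> 0 \<Longrightarrow> h u = u" by (simp add: k_def h0 divide_eq_eq)
  then show ?thesis by (cases "u = 0") (auto simp: h_def)
qed



lemma deriv_real:
  fixes g :: "complex \<Rightarrow> complex"
  assumes holf: "g holomorphic_on ball 0 1"
    and bd: "\<And>z w. z \<in> ball 0 1 \<Longrightarrow> w \<in> ball 0 1 \<Longrightarrow> cmod (g z - g w) \<le> 2"
    and odd: "\<And>u. u \<in> ball 0 1 \<Longrightarrow> g u - g (- u) = 2 * u"
    and z: "z \<in> ball 0 1" "z \<noteq> 0"
  shows "Im (deriv g (- z)) = 0"
proof (rule ccontr)
  assume nz: "Im (deriv g (- z)) \<noteq> 0"
  define Q where "Q = (\<lambda>l. (g z - g (- (l * z))) / (2 * z))"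
  have Qbd: "norm (Q l) \<le> 1" if l: "norm l < 1" for l
  proof -
    define F where "F = (\<lambda>u. (g u - g ((- l) * u)) / 2)"
    have cm: "(- l) * u \<in> ball 0 1" if "u \<in> ball 0 1" for u
    proof -
      have "norm l * norm u \<le> norm u" using l by (intro mult_left_le_one_le) auto
      then show ?thesis using that by (simp add: norm_mult)
    qed
    have hF: "F holomorphic_on ball 0 1" unfolding F_def
      using neg_hol[OF holf cm] holf by (auto intro!: holomorphic_intros)
    have F0: "F 0 = 0" by (simp add: F_def)
    have Fb: "norm (F u) \<le> 1" if "u \<in> ball 0 1" for u
      using bd[OF that cm[OF that]] by (simp add: F_def norm_divide)
    have "norm (F z) \<le> norm z" by (rule schwarz_le[OF hF F0 Fb]) (use z in auto)
    moreover have "Q l = F z / z" by (simp add: Q_def F_def)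
    ultimately show ?thesis using z by (simp add: norm_divide divide_le_eq)
  qed
  have Q1: "Q 1 = 1" using odd[OF z(1)] z by (simp add: Q_def)
  define c where "c = deriv g (- z) / 2"
  have gd: "(g has_field_derivative deriv g (- z)) (at (- z))"
    by (rule holomorphic_derivI[OF holf]) (use z in auto)
  have gd1: "(g has_field_derivative deriv g (- z)) (at (- (1 * z)))" using gd by simp
  have ld: "((\<lambda>l. - (l * z)) has_field_derivative - z) (at 1)"
    by (auto intro!: derivative_eq_intros)
  have "((\<lambda>l. g (- (l * z))) has_field_derivative deriv g (- z) * (- z)) (at 1)"
    using DERIV_chain2[OF gd1 ld] .
  then have "(Q has_field_derivative (0 - deriv g (- z) * (- z)) / (2 * z)) (at 1)"
    unfolding Q_def by (intro DERIV_cdivide DERIV_diff DERIV_const)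
  moreover have "(0 - deriv g (- z) * (- z)) / (2 * z) = c" using z by (simp add: c_def)
  ultimately have Qd: "(Q has_field_derivative c) (at 1)" by simp
  then have lim1: "((\<lambda>y. (Q y - Q 1) / (y - 1)) \<longlongrightarrow> c) (at 1)"
    by (simp add: has_field_derivative_iff)
  define a where "a = Re c"
  define b where "b = Im c"
  have bnz: "b \<noteq> 0" using nz by (simp add: b_def c_def)
  define K where "K = (\<bar>a\<bar> + 1) / b"
  define w where "w = Complex (-1) (-K)"
  have wnz: "w \<noteq> 0" by (simp add: w_def complex_eq_iff)
  have Recw: "Re (c * w) > 0"
    using bnz by (simp add: w_def K_def a_def[symmetric] b_def[symmetric])
  define p where "p = (\<lambda>s::real. 1 + of_real s * w)"
  have pne: "p s \<noteq> 1" if "s > 0" for s using that wnz by (simp add: p_def)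
  have p_lim: "filterlim p (at 1) (at_right 0)"
    unfolding filterlim_at
  proof
    show "(p \<longlongrightarrow> 1) (at_right 0)" unfolding p_def by (auto intro!: tendsto_eq_intros)
    show "\<forall>\<^sub>F s in at_right 0. p s \<in> UNIV \<and> p s \<noteq> 1"
      using eventually_at_right_less[of "0::real"] by eventually_elim (use pne in auto)
  qed
  have L: "((\<lambda>s. (Q (p s) - Q 1) / (p s - 1)) \<longlongrightarrow> c) (at_right 0)"
    using filterlim_compose[OF lim1 p_lim] .
  then have L2: "((\<lambda>s. (Q (p s) - Q 1) / (p s - 1) * w) \<longlongrightarrow> c * w) (at_right 0)"
    by (rule tendsto_mult_right)
  have "\<forall>\<^sub>F s in at_right 0. Re ((Q (p s) - Q 1) / (p s - 1) * w) > 0"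
    using order_tendstoD(1)[OF tendsto_Re[OF L2] Recw] .
  moreover have "\<forall>\<^sub>F s in at_right 0. (0::real) < s" by (rule eventually_at_right_less)
  moreover have "\<forall>\<^sub>F s in at_right 0. norm (p s) < 1"
    unfolding eventually_at_right_field
  proof (intro exI[of _ "1 / (1 + K^2)"] conjI allI impI)
    show "(0::real) < 1 / (1 + K^2)" by (simp add: add_pos_nonneg)
    fix s :: real assume s: "0 < s" "s < 1 / (1 + K^2)"
    have ps: "p s = Complex (1 - s) (- (s * K))" by (simp add: p_def w_def complex_eq_iff)
    have "s * (1 + K^2) < 1" using s by (simp add: field_simps add_pos_nonneg)
    then have "s * (s * (1 + K^2)) < s * 1" using s by (intro mult_strict_left_mono) auto
    then have "(1 - s)^2 + (- (s * K))^2 < 1" using s by (simp add: power2_eq_square algebra_simps)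
    then show "norm (p s) < 1" unfolding ps by (simp add: cmod_def)
  qed
  ultimately have "\<forall>\<^sub>F s in at_right 0. Re ((Q (p s) - Q 1) / (p s - 1) * w) > 0 \<and> 0 < s \<and> norm (p s) < 1"
    by eventually_elim auto
  then obtain s :: real where s: "Re ((Q (p s) - Q 1) / (p s - 1) * w) > 0" "0 < s" "norm (p s) < 1"
    using eventually_happens[of _ "at_right (0::real)"] trivial_limit_at_right_real by blast
  have "(Q (p s) - Q 1) / (p s - 1) * w = (Q (p s) - 1) / of_real s"
    using s(2) wnz Q1 by (simp add: p_def field_simps)
  then have "Re (Q (p s) - 1) / s > 0" using s(1) by (simp add: Re_divide_of_real)
  then have "Re (Q (p s)) > 1" using s(2) by (simp add: zero_less_divide_iff)
  moreover have "Re (Q (p s)) \<le> 1" using complex_Re_le_cmod[of "Q (p s)"] Qbd[OF s(3)] by linarith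
  ultimately show False by simp
qed



lemma Diam_ge: "a \<in> E \<Longrightarrow> b \<in> E \<Longrightarrow> ereal (cmod (a - b)) \<le> Diam E"
  unfolding Diam_def by (rule SUP_upper2[of a], assumption, rule SUP_upper, assumption)

lemma Diam_ball: "Diam (ball 0 1) = 2"
proof (rule antisym)
  show "Diam (ball 0 1) \<le> 2" unfolding Diam_def
  proof (intro SUP_least)
    fix z w :: complex assume "z \<in> ball 0 1" "w \<in> ball 0 1"
    then have "cmod (z - w) \<le> 2" using norm_triangle_ineq4[of z w] by simp
    then show "ereal (cmod (z - w)) \<le> 2" by simp
  qed
  show "2 \<le> Diam (ball 0 1)"
  proof (rule dense_le)
    fix y assume "y < (2::ereal)"
    then obtain t :: real where t: "y < ereal t" "ereal t < 2" using ereal_dense2 by blast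
    define r where "r = max (1/2) ((t/2 + 1)/2)"
    have "(t/2+1)/2 \<le> r" "1/2 \<le> r" by (simp_all add: r_def)
    moreover have "r < 1" using t by (simp add: r_def)
    ultimately have r: "0 < r" "r < 1" "t < 2 * r" using t by auto
    have "ereal (cmod (of_real r - of_real (-r))) \<le> Diam (ball 0 1)"
      by (rule Diam_ge) (use r in auto)
    moreover have "cmod (complex_of_real r - of_real (-r)) = 2 * r" using r
      by (simp flip: of_real_diff)
    ultimately have A: "ereal (2 * r) \<le> Diam (ball 0 1)" by simp
    have "ereal t < ereal (2 * r)" using r by simp
    then have "y < ereal (2 * r)" using t(1) by (rule less_trans[rotated])
    then show "y \<le> Diam (ball 0 1)" using A by simp
  qed
qed

lemma key:
  fixes g :: "complex \<Rightarrow> complex" and x :: real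
  assumes holf: "g holomorphic_on ball 0 1"
    and D: "Diam (g ` ball 0 1) \<le> 2"
    and x: "0 < x" "x < 1"
    and gx: "g (complex_of_real x) = complex_of_real x"
    and gmx: "g (- complex_of_real x) = - complex_of_real x"
  shows "\<forall>z\<in>ball 0 1. g z = z"
proof -
  have bd: "cmod (g z - g w) \<le> 2" if "z \<in> ball 0 1" "w \<in> ball 0 1" for z w
  proof -
    have "ereal (cmod (g z - g w)) \<le> 2" using Diam_ge[of "g z" _ "g w"] that D
      by (meson image_eqI order.trans)
    then show ?thesis by simp
  qed
  have odd: "g u - g (- u) = 2 * u" if "u \<in> ball 0 1" for u
    by (rule odd_part[OF holf bd x gx gmx that])
  have hd: "deriv g holomorphic_on ball 0 1" by (rule holomorphic_deriv[OF holf]) auto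
  define U :: "complex set" where "U = ball (1/2) (1/4)"
  have Usub: "U \<subseteq> ball 0 1"
  proof
    fix v assume "v \<in> U"
    then have "cmod (1/2 - v) < 1/4" by (simp add: U_def dist_norm)
    moreover have "cmod v \<le> cmod (1/2::complex) + cmod (1/2 - v)" using norm_triangle_ineq4[of "1/2::complex" "1/2 - v"] by simp
    ultimately show "v \<in> ball 0 1" by simp
  qed
  have U: "open U" "U \<noteq> {}" "U \<subseteq> ball 0 1" "0 \<notin> U"
    using Usub unfolding U_def by (auto simp: dist_norm)
  have "deriv g constant_on ball 0 1"
  proof (rule ccontr)
    assume "\<not> deriv g constant_on ball 0 1"
    then have "open (deriv g ` U)"
      using open_mapping_thm[OF hd _ _ U(1) U(3)] by auto
    moreover have "deriv g ` U \<subseteq> \<real>"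
    proof
      fix v assume "v \<in> deriv g ` U"
      then obtain u where u: "u \<in> U" "v = deriv g u" by auto
      have "Im (deriv g (- (- u))) = 0"
        by (rule deriv_real[OF holf bd odd]) (use u U in auto)
      then show "v \<in> \<real>" using u by (simp add: complex_is_Real_iff)
    qed
    ultimately show False using not_open_sub_reals U(2) by blast
  qed
  then obtain c where c: "\<And>u. u \<in> ball 0 1 \<Longrightarrow> deriv g u = c" unfolding constant_on_def by blast
  have "\<exists>d. \<forall>u\<in>ball 0 1. g u - c * u = d"
  proof (rule has_field_derivative_zero_constant)
    fix u :: complex assume u: "u \<in> ball 0 1"
    have "(g has_field_derivative deriv g u) (at u within ball 0 1)"
      by (rule holomorphic_derivI[OF holf]) (use u in auto)
    then have D1: "(g has_field_derivative c) (at u within ball 0 1)" using c[OF u] by simp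
    have "((\<lambda>u. g u - c * u) has_field_derivative c - c) (at u within ball 0 1)"
      by (rule DERIV_diff[OF D1 DERIV_cmult_Id])
    then show "((\<lambda>u. g u - c * u) has_field_derivative 0) (at u within ball 0 1)" by simp
  qed auto
  then obtain d where d0: "\<And>u. u \<in> ball 0 1 \<Longrightarrow> g u - c * u = d" by blast
  have d: "g u = c * u + d" if "u \<in> ball 0 1" for u using d0[OF that] by (simp add: diff_eq_eq)
  have xb: "complex_of_real x \<in> ball 0 1" "- complex_of_real x \<in> ball 0 1" using x by auto
  have e1: "c * x + d = x" using d[OF xb(1)] gx by simp
  have e2: "- (c * x) + d = - x" using d[OF xb(2)] gmx by simp
  have "(c * x + d) + (- (c * x) + d) = x + (- x)" using e1 e2 by simp
  then have "d + d = 0" by simp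
  then have "d = 0" by simp
  then have "c = 1" using e1 x by simp
  then show ?thesis using d \<open>d = 0\<close> by simp
qed


theorem mainTheorem7:
  fixes g :: "complex \<Rightarrow> complex" and x :: real
  assumes "g holomorphic_on ball 0 1"
    and "0 < x" and "x < 1"
    and "g (complex_of_real x) = complex_of_real x"
    and "g (- complex_of_real x) = - complex_of_real x"
  shows "Diam (g ` ball 0 1) \<ge> 2 \<and>
         (Diam (g ` ball 0 1) = 2 \<longleftrightarrow> (\<forall>z\<in>ball 0 1. g z = z))"
proof -
  have idD: "Diam (g ` ball 0 1) = 2" if "\<forall>z\<in>ball 0 1. g z = z"
  proof -
    have "g ` ball 0 1 = ball 0 1" using that by force
    then show ?thesis using Diam_ball by simp
  qed
  have K: "\<forall>z\<in>ball 0 1. g z = z" if "Diam (g ` ball 0 1) \<le> 2"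
    using key[OF assms(1) that assms(2-5)] .
  show ?thesis
  proof (cases "Diam (g ` ball 0 1) \<le> 2")
    case True
    then show ?thesis using K idD by auto
  next
    case False
    then have "Diam (g ` ball 0 1) > 2" by simp
    then show ?thesis using idD by auto
  qed
qed

end
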